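(* Let $(a,b)\in P$ with $|a|>2$, and consider the affine curve $y^2+(x^2-1)(x^2+ax+b)=0$. Then $$N(a,b)\ge 2+\sqrt{\frac{|a|-2}{2(1+b-|a|)}}.$$
   Context: Let $P$ be the set of $(a,b)\in\mathbb{R}^2$ such that $h(x)=x^2+ax+b$ has no multiple root and $h(x)>0$ for all real $x$ with $|x|\ge1$ (equivalently: $a^2<4b$, or $a^2>4b$ and $|a|<\min\{2,b+1\}$). For $(a,b)\in P$ let $C_{a,b}$ be the affine curve $y^2+(x^2-1)(x^2+ax+b)=0$, $\mathbb{R}[C_{a,b}]=\mathbb{R}[x,y]/(y^2+(x^2-1)(x^2+ax+b))$. For $g=u(x)+v(x)y$ put $\delta(g)=\max\{\deg u,\deg v+2\}$, and for $0\ne g$ let $\theta(g)$ be the least integer $e\ge0$ with $g=\sum_i g_i^2$, $g_i\in\mathbb{R}[C_{a,b}]$, $\delta(g_i)\le e$. Define $N(a,b):=\theta(1-x^2)$ computed in $\mathbb{R}[C_{a,b}]$ (the stability constant of $C_{a,b}$). *)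

theory Defs
  imports "HOL-Analysis.Analysis" "HOL-Computational_Algebra.Polynomial"
begin

definition hpoly :: "real \<Rightarrow> real \<Rightarrow> real poly" where
  "hpoly a b = [:b, a, 1:]"

(* The parameter set P: h has no multiple root and h(x) > 0 for |x| >= 1.
   (A monic real quadratic with a multiple root has a real double root,
   so rsquarefree over the reals is the same as "no multiple root".) *)
definition P :: "(real \<times> real) set" where
  "P = {(a, b). rsquarefree (hpoly a b) \<and> (\<forall>x::real. \<bar>x\<bar> \<ge> 1 \<longrightarrow> poly (hpoly a b) x > 0)}"

(* Elements of R[C_{a,b}] = R[x,y]/(y^2 + (x^2-1) h(x)) are uniquely written
   u(x) + v(x) y; we represent them by the pair (u, v).
   Multiplication uses y^2 = -(x^2-1) h(x). *)
definition cmult :: "real \<Rightarrow> real \<Rightarrow> real poly \<times> real poly \<Rightarrow> real poly \<times> real poly \<Rightarrow> real poly \<times> real poly" where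
  "cmult a b g1 g2 =
     (fst g1 * fst g2 - snd g1 * snd g2 * [:-1, 0, 1:] * hpoly a b,
      fst g1 * snd g2 + snd g1 * fst g2)"

(* delta(u + v y) = max{deg u, deg v + 2}, with deg 0 = -infinity *)
definition cdelta :: "real poly \<times> real poly \<Rightarrow> nat" where
  "cdelta g = (if snd g = 0 then degree (fst g) else max (degree (fst g)) (degree (snd g) + 2))"

definition sos_le :: "real \<Rightarrow> real \<Rightarrow> real poly \<times> real poly \<Rightarrow> nat \<Rightarrow> bool" where
  "sos_le a b g e \<longleftrightarrow> (\<exists>gs :: (real poly \<times> real poly) list.
      (\<forall>gi \<in> set gs. cdelta gi \<le> e) \<and>
      fst g = sum_list (map (\<lambda>gi. fst (cmult a b gi gi)) gs) \<and>
      snd g = sum_list (map (\<lambda>gi. snd (cmult a b gi gi)) gs))"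

(* theta(g): least e with such a representation (infinity if none exists) *)
definition theta :: "real \<Rightarrow> real \<Rightarrow> real poly \<times> real poly \<Rightarrow> enat" where
  "theta a b g = (INF e \<in> {e. sos_le a b g e}. enat e)"

definition N :: "real \<Rightarrow> real \<Rightarrow> enat" where
  "N a b = theta a b ([:1, 0, -1:], 0)"

end

theory Submission
  imports Defs
begin

fun cheb :: "nat \<Rightarrow> real poly" where
  "cheb 0 = 1"
| "cheb (Suc 0) = [:0,1:]"
| "cheb (Suc (Suc n)) = smult 2 [:0,1:] * cheb (Suc n) - cheb n"

lemma cheb_degree: "degree (cheb n) \<le> n"
proof (induction n rule: cheb.induct)
  case (3 n)
  have "degree (smult 2 [:0,1:] * cheb (Suc n)) \<le> Suc (Suc n)"
    using degree_mult_le[of "smult 2 [:0,1::real:]" "cheb (Suc n)"] 3 by simp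
  moreover have "degree (cheb n) \<le> Suc (Suc n)" using 3 by simp
  ultimately show ?case by (simp add: degree_diff_le)
qed auto

lemma cheb_cos: "poly (cheb n) (cos t) = cos (real n * t)"
proof (induction n rule: cheb.induct)
  case (3 n)
  define A where "A = real (Suc n) * t"
  have e1: "real (Suc (Suc n)) * t = A + t" by (simp add: A_def algebra_simps)
  have e2: "real n * t = A - t" by (simp add: A_def algebra_simps)
  have "poly (cheb (Suc (Suc n))) (cos t) = 2 * cos t * cos A - cos (A - t)"
    using 3 by (simp add: A_def e2)
  also have "\<dots> = cos (A + t)" by (simp add: cos_add cos_diff)
  finally show ?case by (simp only: e1)
qed auto

lemma cheb_one: "poly (cheb n) 1 = 1"
  using cheb_cos[of n 0] by simp

lemma cheb_deriv_one: "poly (pderiv (cheb n)) 1 = real n ^ 2"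
proof (induction n rule: cheb.induct)
  case (3 n)
  then show ?case by (simp add: pderiv_mult pderiv_diff pderiv_smult cheb_one algebra_simps power2_eq_square pderiv_pCons)
qed (auto simp: pderiv_pCons)

definition node :: "nat \<Rightarrow> nat \<Rightarrow> real" where
  "node d k = cos (real k * pi / real d)"
definition lden :: "nat \<Rightarrow> nat \<Rightarrow> real" where
  "lden d k = (\<Prod>j\<in>{..d}-{k}. node d k - node d j)"
definition lag :: "nat \<Rightarrow> nat \<Rightarrow> real poly" where
  "lag d k = smult (1 / lden d k) (\<Prod>j\<in>{..d}-{k}. [:- node d j, 1:])"

lemma pderiv_sum': "pderiv (sum f A) = (\<Sum>x\<in>A. pderiv (f x))"
  using higher_pderiv_sum[of 1 f A] by simp

lemma node_less: assumes "d \<ge> 1" "j < k" "k \<le> d" shows "node d k < node d j"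
proof -
  have "real j * pi / real d < real k * pi / real d"
    using assms by (simp add: divide_strict_right_mono)
  moreover have "real k * pi / real d \<le> pi"
    using assms by (simp add: field_simps)
  moreover have "0 \<le> real j * pi / real d" by simp
  ultimately show ?thesis unfolding node_def by (intro cos_monotone_0_pi) auto
qed

lemma node_inj: assumes "d \<ge> 1" "j \<le> d" "k \<le> d" "node d j = node d k" shows "j = k"
  using node_less[OF assms(1), of j k] node_less[OF assms(1), of k j] assms
  by (metis less_irrefl linorder_neqE_nat)

lemma node_0: "node d 0 = 1" by (simp add: node_def)

lemma node_le1: "node d k \<le> 1" by (simp add: node_def)
lemma node_ge: "-1 \<le> node d k" by (simp add: node_def)

lemma cheb_node: assumes "d \<ge> 1" shows "poly (cheb d) (node d k) = (-1) ^ k"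
proof -
  have "real d * (real k * pi / real d) = real k * pi" using assms by simp
  then show ?thesis unfolding node_def cheb_cos by (simp add: cos_npi)
qed

lemma lden_sign: assumes "d \<ge> 1" "k \<le> d" shows "0 < (-1) ^ k * lden d k"
proof -
  have split: "{..d}-{k} = {..<k} \<union> {k<..d}" using assms by auto
  have "lden d k = (\<Prod>j\<in>{..<k}. node d k - node d j) * (\<Prod>j\<in>{k<..d}. node d k - node d j)"
    unfolding lden_def split by (rule prod.union_disjoint) auto
  also have "(\<Prod>j\<in>{..<k}. node d k - node d j) = (-1)^k * (\<Prod>j\<in>{..<k}. node d j - node d k)"
    using prod_uminus[of "\<lambda>j. node d j - node d k" "{..<k}"] by simp
  finally have "(-1) ^ k * lden d k = (\<Prod>j\<in>{..<k}. node d j - node d k) * (\<Prod>j\<in>{k<..d}. node d k - node d j)"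
    by (simp add: power_mult_distrib[symmetric] mult.assoc[symmetric])
  moreover have "0 < (\<Prod>j\<in>{..<k}. node d j - node d k)"
    by (rule prod_pos) (use node_less assms in auto)
  moreover have "0 < (\<Prod>j\<in>{k<..d}. node d k - node d j)"
    by (rule prod_pos) (use node_less assms in auto)
  ultimately show ?thesis by simp
qed

lemma lden_nz: "d \<ge> 1 \<Longrightarrow> k \<le> d \<Longrightarrow> lden d k \<noteq> 0"
  using lden_sign by fastforce

lemma poly_lag: assumes "d \<ge> 1" "j \<le> d" "k \<le> d"
  shows "poly (lag d k) (node d j) = (if j = k then 1 else 0)"
proof (cases "j = k")
  case True
  then show ?thesis using lden_nz[OF assms(1,3)]
    by (simp add: lag_def poly_prod lden_def)
next
  case False
  have "(\<Prod>i\<in>{..d}-{k}. node d j - node d i) = 0"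
    by (rule prod_zero) (use False assms in auto)
  then show ?thesis using False by (simp add: lag_def poly_prod)
qed

lemma degree_lag: assumes "k \<le> d" shows "degree (lag d k) \<le> d"
proof -
  have "degree (\<Prod>j\<in>{..d}-{k}. [:- node d j, 1::real:]) \<le> (\<Sum>j\<in>{..d}-{k}. degree [:- node d j, 1::real:])"
    using degree_prod_sum_le[of "{..d}-{k}" "\<lambda>j. [:- node d j, 1::real:]"] by (simp add: o_def)
  also have "\<dots> \<le> d" by (use assms in \<open>simp add: card_Diff_singleton\<close>)
  finally show ?thesis by (simp add: lag_def)
qed

lemma interp: assumes "d \<ge> 1" "degree q \<le> d"
  shows "q = (\<Sum>k\<le>d. smult (poly q (node d k)) (lag d k))"
proof (rule ccontr)
  define r where "r = q - (\<Sum>k\<le>d. smult (poly q (node d k)) (lag d k))"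
  assume "q \<noteq> (\<Sum>k\<le>d. smult (poly q (node d k)) (lag d k))"
  then have rnz: "r \<noteq> 0" by (simp add: r_def)
  have "degree r \<le> d" unfolding r_def
    by (intro degree_diff_le assms degree_sum_le) (auto intro: order.trans[OF degree_smult_le] degree_lag)
  have roots: "node d j \<in> {x. poly r x = 0}" if "j \<le> d" for j
  proof -
    have "(\<Sum>k\<le>d. poly q (node d k) * poly (lag d k) (node d j)) = (\<Sum>k\<le>d. if k = j then poly q (node d j) else 0)"
      by (rule sum.cong) (use poly_lag assms that in auto)
    also have "\<dots> = poly q (node d j)" using that by simp
    finally show ?thesis by (simp add: r_def poly_sum)
  qed
  have "card (node d ` {..d}) \<le> card {x. poly r x = 0}"
    by (rule card_mono) (use poly_roots_finite[OF rnz] roots in auto)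
  also have "\<dots> \<le> degree r" by (rule card_poly_roots_bound[OF rnz])
  finally have "card (node d ` {..d}) \<le> d" using \<open>degree r \<le> d\<close> by simp
  moreover have "card (node d ` {..d}) = Suc d"
    by (subst card_image) (auto intro!: inj_onI node_inj[OF assms(1)])
  ultimately show False by simp
qed

lemma lag_deriv_sign: assumes "d \<ge> 1" "k \<le> d"
  shows "0 \<le> (-1) ^ k * poly (pderiv (lag d k)) 1"
proof -
  have N: "0 \<le> poly (pderiv (\<Prod>j\<in>{..d}-{k}. [:- node d j, 1::real:])) 1"
    unfolding pderiv_prod
    by (auto simp: poly_sum poly_prod pderiv_pCons intro!: sum_nonneg prod_nonneg simp: node_le1)
  have "(-1) ^ k * poly (pderiv (lag d k)) 1 =
      ((-1) ^ k * lden d k) * poly (pderiv (\<Prod>j\<in>{..d}-{k}. [:- node d j, 1::real:])) 1 / (lden d k)^2"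
    using lden_nz[OF assms] by (simp add: lag_def pderiv_smult power2_eq_square field_simps)
  also have "\<dots> \<ge> 0" using lden_sign[OF assms] N by simp
  finally show ?thesis .
qed

lemma markov1: assumes "degree q \<le> d" "\<And>x. -1 \<le> x \<Longrightarrow> x \<le> 1 \<Longrightarrow> \<bar>poly q x\<bar> \<le> B"
  shows "\<bar>poly (pderiv q) 1\<bar> \<le> real d ^ 2 * B"
proof (cases "d = 0")
  case True
  then have "pderiv q = 0" using assms(1) by (simp add: pderiv_eq_0_iff)
  then show ?thesis using True by simp
next
  case False
  then have d1: "d \<ge> 1" by simp
  define lam where "lam k = poly (pderiv (lag d k)) 1" for k
  have der: "poly (pderiv p) 1 = (\<Sum>k\<le>d. poly p (node d k) * lam k)" if "degree p \<le> d" for p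
  proof -
    have "poly (pderiv p) 1 = poly (pderiv (\<Sum>k\<le>d. smult (poly p (node d k)) (lag d k))) 1"
      using interp[OF d1 that] by simp
    also have "\<dots> = (\<Sum>k\<le>d. poly p (node d k) * lam k)"
      by (simp add: pderiv_sum' pderiv_smult poly_sum lam_def)
    finally show ?thesis .
  qed
  have abslam: "\<bar>lam k\<bar> = (-1)^k * lam k" if "k \<le> d" for k
  proof -
    have "\<bar>lam k\<bar> = \<bar>(-1)^k * lam k\<bar>" by (simp add: abs_mult)
    then show ?thesis using lag_deriv_sign[OF d1 that] unfolding lam_def by simp
  qed
  have "real d ^ 2 = (\<Sum>k\<le>d. (-1)^k * lam k)"
    using der[OF cheb_degree] by (simp add: cheb_deriv_one cheb_node[OF d1])
  also have "\<dots> = (\<Sum>k\<le>d. \<bar>lam k\<bar>)" by (rule sum.cong) (auto simp: abslam)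
  finally have T: "real d ^ 2 = (\<Sum>k\<le>d. \<bar>lam k\<bar>)" .
  have "\<bar>poly (pderiv q) 1\<bar> = \<bar>\<Sum>k\<le>d. poly q (node d k) * lam k\<bar>" using der[OF assms(1)] by simp
  also have "\<dots> \<le> (\<Sum>k\<le>d. \<bar>poly q (node d k) * lam k\<bar>)" by (rule sum_abs)
  also have "\<dots> \<le> (\<Sum>k\<le>d. B * \<bar>lam k\<bar>)"
    by (rule sum_mono) (auto simp: abs_mult intro!: mult_right_mono assms(2) node_ge node_le1)
  also have "\<dots> = real d ^ 2 * B" by (simp add: T sum_distrib_left mult.commute)
  finally show ?thesis .
qed

lemma markovm1: assumes "degree q \<le> d" "\<And>x. -1 \<le> x \<Longrightarrow> x \<le> 1 \<Longrightarrow> \<bar>poly q x\<bar> \<le> B"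
  shows "\<bar>poly (pderiv q) (-1)\<bar> \<le> real d ^ 2 * B"
proof -
  define q' where "q' = pcompose q [:0,-1:]"
  have "degree q' \<le> d" using assms(1) by (simp add: q'_def degree_pcompose)
  moreover have "\<bar>poly q' x\<bar> \<le> B" if "-1 \<le> x" "x \<le> 1" for x
    using assms(2)[of "-x"] that by (simp add: q'_def poly_pcompose)
  ultimately have "\<bar>poly (pderiv q') 1\<bar> \<le> real d ^ 2 * B" by (rule markov1)
  then show ?thesis by (simp add: q'_def pderiv_pcompose poly_pcompose pderiv_pCons)
qed

lemma core:
  fixes a b :: real and d n :: nat and vs :: "nat \<Rightarrow> real poly" and W :: "real poly"
  assumes a2: "a > 2" and Hpos: "1 - a + b > 0"
    and deg: "\<And>i. i < n \<Longrightarrow> degree (vs i) \<le> d"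
    and Wnn: "\<And>x. poly W x \<ge> 0"
    and iden: "[:b,a,1:] * (\<Sum>i<n. vs i * vs i) - [:-1,0,1:] * W = 1"
  shows "(a - 2) / (2 * (1 - a + b)) \<le> real d ^ 2"
proof -
  define V where "V = (\<Sum>i<n. vs i * vs i)"
  define Hc where "Hc = 1 - a + b"
  have Hc: "Hc > 0" using Hpos by (simp add: Hc_def)
  have polyV: "poly V x = (\<Sum>i<n. (poly (vs i) x)^2)" for x
    by (simp add: V_def poly_sum power2_eq_square)
  have Vnn: "poly V x \<ge> 0" for x unfolding polyV by (rule sum_nonneg) auto
  have idx: "(b + a * x + x^2) * poly V x - (x^2 - 1) * poly W x = 1" for x
    using arg_cong[OF iden, of "\<lambda>p. poly p x"] by (simp add: V_def[symmetric] algebra_simps power2_eq_square)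
  have V1: "Hc * poly V (-1) = 1" using idx[of "-1"] by (simp add: Hc_def algebra_simps)
  have Vle: "poly V x \<le> 1 / Hc" if "-1 \<le> x" "x \<le> 1" for x
  proof -
    have hge: "b + a * x + x^2 - Hc = (x + 1) * (x - 1 + a)" by (simp add: Hc_def algebra_simps power2_eq_square)
    have "(x + 1) * (x - 1 + a) \<ge> 0" using that a2 by simp
    then have h1: "b + a * x + x^2 \<ge> Hc" using hge by linarith
    have "(x^2 - 1) * poly W x \<le> 0"
    proof -
      have "x^2 \<le> 1" using that by (simp add: abs_square_le_1)
      then show ?thesis using Wnn[of x] by (simp add: mult_nonpos_nonneg)
    qed
    then have "(b + a * x + x^2) * poly V x \<le> 1" using idx[of x] by linarith
    moreover have "Hc * poly V x \<le> (b + a * x + x^2) * poly V x"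
      using h1 Vnn[of x] by (simp add: mult_right_mono)
    ultimately have "Hc * poly V x \<le> 1" by linarith
    then show ?thesis using Hc by (simp add: field_simps)
  qed
  have "pderiv ([:b,a,1:] * V - [:-1,0,1:] * W) = 0" using iden by (simp add: V_def)
  then have "poly (pderiv ([:b,a,1:] * V - [:-1,0,1:] * W)) (-1) = 0" by simp
  then have dV: "(a - 2) * poly V (-1) + Hc * poly (pderiv V) (-1) + 2 * poly W (-1) = 0"
  proof -
    have e1: "pderiv [:b,a,1:] = [:a,2:]" by (simp add: pderiv_pCons)
    have e2: "pderiv [:-1,0,1::real:] = [:0,2:]" by (simp add: pderiv_pCons)
    assume "poly (pderiv ([:b,a,1:] * V - [:-1,0,1:] * W)) (-1) = 0"
    then have "poly (pderiv [:b,a,1:] * V + [:b,a,1:] * pderiv V - (pderiv [:-1,0,1:] * W + [:-1,0,1:] * pderiv W)) (-1) = 0"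
      by (simp only: pderiv_mult pderiv_diff mult.commute add.commute)
    then show ?thesis unfolding e1 e2 poly_diff poly_add poly_mult by (simp add: Hc_def algebra_simps)
  qed
  define c where "c i = poly (pderiv (vs i)) (-1)" for i
  define p where "p = (\<Sum>i<n. smult (c i) (vs i))"
  define S where "S = (\<Sum>i<n. (c i)^2)"
  have Snn: "S \<ge> 0" unfolding S_def by (rule sum_nonneg) auto
  have degp: "degree p \<le> d" unfolding p_def
    by (rule degree_sum_le) (auto intro: order.trans[OF degree_smult_le] deg)
  have polyp: "poly p x = (\<Sum>i<n. c i * poly (vs i) x)" for x by (simp add: p_def poly_sum)
  have dVp: "poly (pderiv V) (-1) = 2 * poly p (-1)"
    by (simp add: V_def pderiv_sum' pderiv_mult poly_sum polyp c_def sum_distrib_left algebra_simps)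
  have dp: "poly (pderiv p) (-1) = S"
    by (simp add: p_def pderiv_sum' pderiv_smult poly_sum S_def c_def power2_eq_square)
  have CS: "(poly p x)^2 \<le> S * poly V x" for x
    unfolding polyp polyV S_def by (rule Cauchy_Schwarz_ineq_sum)
  define B where "B = sqrt (S / Hc)"
  have pB: "\<bar>poly p x\<bar> \<le> B" if "-1 \<le> x" "x \<le> 1" for x
  proof -
    have "(poly p x)^2 \<le> S * (1 / Hc)"
      using CS[of x] mult_left_mono[OF Vle[OF that] Snn] by linarith
    then have "sqrt ((poly p x)^2) \<le> sqrt (S / Hc)" by (intro real_sqrt_le_mono) simp
    then show ?thesis by (simp only: B_def real_sqrt_abs)
  qed
  have M: "\<bar>S\<bar> \<le> real d ^ 2 * B" using markovm1[OF degp pB] dp by simp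
  have B2: "B^2 = S / Hc" unfolding B_def using Snn Hc by simp
  have SB: "S \<le> (real d ^ 2)^2 / Hc"
  proof (cases "S = 0")
    case True then show ?thesis using Hc by simp
  next
    case False
    have "S^2 \<le> (real d ^ 2 * B)^2" using M Snn by (simp add: power_mono)
    also have "\<dots> = (real d ^ 2)^2 * (S / Hc)" by (simp add: power_mult_distrib B2)
    finally have "S * S \<le> S * ((real d ^ 2)^2 / Hc)" by (simp add: power2_eq_square field_simps)
    moreover have "S > 0" using False Snn by simp
    ultimately show ?thesis by (meson mult_le_cancel_left_pos)
  qed
  have p1: "(poly p (-1))^2 \<le> S / Hc"
  proof -
    have "poly V (-1) = 1 / Hc" using V1 Hc by (simp add: field_simps)
    then show ?thesis using CS[of "-1"] by simp
  qed
  have neg: "2 * Hc * poly p (-1) \<le> -(a - 2) / Hc"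
  proof -
    have "poly V (-1) = 1 / Hc" using V1 Hc by (simp add: field_simps)
    moreover have "poly W (-1) \<ge> 0" by (rule Wnn)
    ultimately have X: "(a-2) * poly V (-1) = (a-2) / Hc" "poly W (-1) \<ge> 0" by simp_all
    have Y: "Hc * poly (pderiv V) (-1) = 2 * Hc * poly p (-1)" using dVp by simp
    have Z: "-(a - 2) / Hc = - ((a-2)/Hc)" by (rule minus_divide_left[symmetric])
    show ?thesis using dV X Y Z by linarith
  qed
  have pos: "0 < (a - 2) / Hc" using a2 Hc by simp
  have "(a - 2) / Hc \<le> - (2 * Hc * poly p (-1))"
    using neg minus_divide_left[of "a-2" Hc] by linarith
  then have "((a - 2) / Hc)^2 \<le> (- (2 * Hc * poly p (-1)))^2"
    using pos by (intro power_mono) auto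
  then have "((a - 2) / Hc)^2 \<le> (2 * Hc * poly p (-1))^2" by simp
  also have "\<dots> = 4 * Hc^2 * (poly p (-1))^2" by (simp add: power_mult_distrib)
  also have "\<dots> \<le> 4 * Hc^2 * (S / Hc)" using p1 by (intro mult_left_mono) auto
  also have "\<dots> = 4 * Hc * S" using Hc by (simp add: power2_eq_square)
  also have "\<dots> \<le> 4 * Hc * ((real d ^ 2)^2 / Hc)" using SB Hc by (intro mult_left_mono) auto
  also have "\<dots> = (2 * real d ^ 2)^2" using Hc by (simp add: power2_eq_square)
  finally have sq: "((a - 2) / Hc)^2 \<le> (2 * real d ^ 2)^2" .
  have "(a - 2) / Hc \<le> 2 * real d ^ 2"
    by (rule power2_le_imp_le[OF sq]) simp
  then have "(a - 2) / Hc / 2 \<le> real d ^ 2" by simp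
  moreover have "(a - 2) / Hc / 2 = (a - 2) / (2 * (1 - a + b))" by (simp add: Hc_def)
  ultimately show ?thesis by (simp only:)
qed

lemma key:
  fixes a b :: real
  assumes hm1: "1 - a + b > 0" and hp1: "1 + a + b > 0" and a2: "\<bar>a\<bar> > 2"
    and sos: "sos_le a b ([:1, 0, -1:], 0) e"
  shows "2 + sqrt ((\<bar>a\<bar> - 2) / (2 * (1 + b - \<bar>a\<bar>))) \<le> real e"
proof -
  define Q :: "real poly" where "Q = [:-1, 0, 1:]"
  define h where "h = hpoly a b"
  obtain gs where gsd: "\<forall>gi \<in> set gs. cdelta gi \<le> e"
    and fsteq: "fst ([:1, 0, -1:], 0::real poly) = sum_list (map (\<lambda>gi. fst (cmult a b gi gi)) gs)"
    using sos unfolding sos_le_def by blast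
  define n where "n = length gs"
  define u where "u i = fst (gs ! i)" for i
  define v where "v i = snd (gs ! i)" for i
  have sumeq: "[:1, 0, -1:] = (\<Sum>i<n. u i * u i - v i * v i * Q * h)"
    using fsteq by (simp add: sum_list_sum_nth n_def atLeast0LessThan cmult_def u_def v_def Q_def h_def)
  have polysum: "poly [:1, 0, -1:] x = (\<Sum>i<n. (poly (u i) x)^2 - (poly (v i) x)^2 * poly Q x * poly h x)" for x
    using arg_cong[OF sumeq, of "\<lambda>p. poly p x"] by (simp add: poly_sum power2_eq_square)
  have uzero: "poly (u i) x = 0" if "i < n" "x = 1 \<or> x = -1" for i x
  proof -
    have "poly Q x = 0" "poly [:1, 0, -1:] x = 0" using that(2) by (auto simp: Q_def)
    then have "(\<Sum>i<n. (poly (u i) x)^2) = 0" using polysum[of x] by simp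
    then have "\<forall>i\<in>{..<n}. (poly (u i) x)^2 = 0" by (subst (asm) sum_nonneg_eq_0_iff) auto
    then show ?thesis using that(1) by simp
  qed
  have "\<exists>w. u i = Q * w" if "i < n" for i
  proof -
    have "poly (u i) 1 = 0" using uzero that by simp
    then obtain q where q: "u i = [:-1, 1:] * q" using poly_eq_0_iff_dvd[of "u i" 1] by (auto elim: dvdE)
    have "poly (u i) (-1) = 0" using uzero that by simp
    then have "poly q (-1) = 0" using q by simp
    then obtain w where w: "q = [:1, 1:] * w" using poly_eq_0_iff_dvd[of q "-1"] by (auto elim: dvdE)
    have "u i = Q * w" by (simp add: q w Q_def mult.assoc[symmetric])
    then show ?thesis by blast
  qed
  then obtain w where w: "\<And>i. i < n \<Longrightarrow> u i = Q * w i" by metis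
  define V where "V = (\<Sum>i<n. v i * v i)"
  define W where "W = (\<Sum>i<n. w i * w i)"
  have "(\<Sum>i<n. u i * u i - v i * v i * Q * h) = (\<Sum>i<n. Q * (Q * (w i * w i)) - Q * (h * (v i * v i)))"
    by (rule sum.cong) (auto simp: w algebra_simps)
  also have "\<dots> = Q * (Q * W - h * V)"
    by (simp add: W_def V_def sum_distrib_left sum_subtractf right_diff_distrib)
  finally have "Q * (Q * W - h * V) = - Q" using sumeq by (simp add: Q_def)
  then have "Q * (Q * W - h * V + 1) = 0" by (simp add: algebra_simps)
  moreover have "Q \<noteq> 0" by (simp add: Q_def)
  ultimately have "Q * W - h * V + 1 = 0" by simp
  then have iden: "h * V - Q * W = 1" by (simp add: algebra_simps)
  have Wnn: "poly W x \<ge> 0" for x by (simp add: W_def poly_sum sum_nonneg)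
  have e2: "e \<ge> 2"
  proof (rule ccontr)
    assume "\<not> e \<ge> 2"
    have "v i = 0" if "i < n" for i
    proof (rule ccontr)
      assume "v i \<noteq> 0"
      then have "cdelta (gs ! i) \<ge> 2" by (simp add: cdelta_def v_def)
      moreover have "cdelta (gs ! i) \<le> e" using gsd that by (simp add: n_def)
      ultimately show False using \<open>\<not> e \<ge> 2\<close> by simp
    qed
    then have "V = 0" by (simp add: V_def)
    then have "poly (- Q * W) 1 = 1" using iden by simp
    then show False by (simp add: Q_def)
  qed
  define d where "d = e - 2"
  have degv: "degree (v i) \<le> d" if "i < n" for i
  proof (cases "v i = 0")
    case False
    have "cdelta (gs ! i) \<le> e" using gsd that by (simp add: n_def)
    then show ?thesis using False by (auto simp: cdelta_def v_def d_def)
  qed simp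
  have bound: "(\<bar>a\<bar> - 2) / (2 * (1 + b - \<bar>a\<bar>)) \<le> real d ^ 2"
  proof (cases "a > 2")
    case True
    have "(a - 2) / (2 * (1 - a + b)) \<le> real d ^ 2"
      by (rule core[OF True hm1 degv Wnn]) (use iden in \<open>simp_all add: h_def hpoly_def V_def Q_def\<close>)
    moreover have "1 + b - \<bar>a\<bar> = 1 - a + b" "\<bar>a\<bar> = a" using True by auto
    ultimately show ?thesis by (simp only:)
  next
    case False
    then have am: "-a > 2" using a2 by simp
    define R :: "real poly" where "R = [:0, -1:]"
    have "pcompose (h * V - Q * W) R = 1" using iden by (simp add: pcompose_1)
    then have "pcompose h R * pcompose V R - pcompose Q R * pcompose W R = 1"
      by (simp add: pcompose_diff pcompose_mult)
    moreover have "pcompose h R = [:b, -a, 1:]" by (simp add: h_def hpoly_def R_def pcompose_pCons)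
    moreover have "pcompose Q R = [:-1, 0, 1:]" by (simp add: Q_def R_def pcompose_pCons)
    moreover have "pcompose V R = (\<Sum>i<n. pcompose (v i) R * pcompose (v i) R)"
      by (simp add: V_def pcompose_sum pcompose_mult)
    ultimately have iden2: "[:b, -a, 1:] * (\<Sum>i<n. pcompose (v i) R * pcompose (v i) R) - [:-1, 0, 1:] * pcompose W R = 1"
      by simp
    have "(- a - 2) / (2 * (1 - (-a) + b)) \<le> real d ^ 2"
    proof (rule core[OF am _ _ _ iden2])
      show "0 < 1 - - a + b" using hp1 by simp
      show "degree (pcompose (v i) R) \<le> d" if "i < n" for i
        using degv[OF that] by (simp add: degree_pcompose R_def)
      show "0 \<le> poly (pcompose W R) x" for x by (simp add: poly_pcompose Wnn)
    qed
    moreover have "1 + b - \<bar>a\<bar> = 1 - (-a) + b" "\<bar>a\<bar> = -a" using False a2 by auto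
    ultimately show ?thesis by (simp only:)
  qed
  have "sqrt ((\<bar>a\<bar> - 2) / (2 * (1 + b - \<bar>a\<bar>))) \<le> sqrt (real d ^ 2)"
    using bound by (rule real_sqrt_le_mono)
  then have "sqrt ((\<bar>a\<bar> - 2) / (2 * (1 + b - \<bar>a\<bar>))) \<le> real d" by simp
  then show ?thesis using e2 by (simp add: d_def of_nat_diff)
qed

theorem proposition4p8:
  fixes a b :: real
  assumes "(a, b) \<in> P" and "\<bar>a\<bar> > 2"
  shows "ereal (2 + sqrt ((\<bar>a\<bar> - 2) / (2 * (1 + b - \<bar>a\<bar>)))) \<le> ereal_of_enat (N a b)"
proof -
  have hpos: "\<And>x::real. \<bar>x\<bar> \<ge> 1 \<Longrightarrow> poly (hpoly a b) x > 0" using assms(1) by (simp add: P_def)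
  have hm1: "1 - a + b > 0" using hpos[of "-1"] by (simp add: hpoly_def)
  have hp1: "1 + a + b > 0" using hpos[of 1] by (simp add: hpoly_def)
  define S where "S = {e. sos_le a b ([:1, 0, -1:], 0) e}"
  have N: "N a b = (INF e\<in>S. enat e)" by (simp add: N_def theta_def S_def)
  show ?thesis
  proof (cases "S = {}")
    case True
    then have "N a b = \<infinity>" by (simp add: N top_enat_def)
    then show ?thesis by simp
  next
    case False
    define m where "m = (LEAST e. e \<in> S)"
    have mS: "m \<in> S" using False unfolding m_def by (metis LeastI equals0I)
    have "(INF e\<in>S. enat e) = enat m"
    proof (rule antisym)
      show "(INF e\<in>S. enat e) \<le> enat m" using mS by (rule INF_lower)
      show "enat m \<le> (INF e\<in>S. enat e)" by (rule INF_greatest) (simp add: m_def Least_le)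
    qed
    moreover have "2 + sqrt ((\<bar>a\<bar> - 2) / (2 * (1 + b - \<bar>a\<bar>))) \<le> real m"
      using key[OF hm1 hp1 assms(2)] mS by (simp add: S_def)
    ultimately show ?thesis by (simp add: N)
  qed
qed

end
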